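(* Let $A\subset\mathbb N$ be a finite alphabet, $x\in A^{\mathbb N}$ any infinite word, and $w$ a finite word with $l(w)>\max A$. Let $\sigma_w$ be the substitution sending each $i\in A$ to the prefix of $w$ of length $l(w)-i$, and let $\int_w x=\sigma_w(x_0)\sigma_w(x_1)\sigma_w(x_2)\cdots$. If for every $n\in A$ the word $w$ is a prefix of $\sigma_w(n)\,w$, then $\int_w x$ is quasiperiodic with $w$ as a quasiperiod. In particular this holds whenever $A\subset\{0,\dots,k\}$ and $w=a^kba^k$ for letters $a\neq b$. *)

theory Defs
  imports Main "HOL-Library.Sublist"
begin

definition sigma :: "'a list \<Rightarrow> nat \<Rightarrow> 'a list" where
  "sigma w i = take (length w - i) w"

definition blockstart :: "'a list \<Rightarrow> (nat \<Rightarrow> nat) \<Rightarrow> nat \<Rightarrow> nat" where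
  "blockstart w x k = (\<Sum>j<k. length (sigma w (x j)))"

text \<open>The infinite word int_w x = sigma_w(x_0) sigma_w(x_1) sigma_w(x_2) ...
  (well defined when all blocks are nonempty, i.e. l(w) > x_n for all n).\<close>
definition integ :: "'a list \<Rightarrow> (nat \<Rightarrow> nat) \<Rightarrow> nat \<Rightarrow> 'a" where
  "integ w x p = (let k = (GREATEST k. blockstart w x k \<le> p)
                  in sigma w (x k) ! (p - blockstart w x k))"

definition occurs_at :: "(nat \<Rightarrow> 'a) \<Rightarrow> 'a list \<Rightarrow> nat \<Rightarrow> bool" where
  "occurs_at z q j \<longleftrightarrow> (\<forall>t<length q. z (j + t) = q ! t)"

definition quasiperiod :: "(nat \<Rightarrow> 'a) \<Rightarrow> 'a list \<Rightarrow> bool" where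
  "quasiperiod z q \<longleftrightarrow> q \<noteq> [] \<and> (\<forall>i. \<exists>j\<le>i. i < j + length q \<and> occurs_at z q j)"

end

theory Submission
  imports Defs
begin

lemma bs_Suc: "blockstart w x (Suc k) = blockstart w x k + length (sigma w (x k))"
  by (simp add: blockstart_def)

lemma sigma_len: "length (sigma w i) = length w - i"
  by (simp add: sigma_def)

lemma bs_ge:
  assumes "\<forall>n. x n < length w"
  shows "k \<le> blockstart w x k"
proof (induction k)
  case (Suc k)
  have "length (sigma w (x k)) \<ge> 1" using assms[rule_format, of k] by (simp add: sigma_len)
  then show ?case using Suc by (simp add: bs_Suc)
qed simp

lemma bs_mono:
  assumes "\<forall>n. x n < length w" and "k \<le> k'"
  shows "blockstart w x k \<le> blockstart w x k'"
  using assms(2)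
proof (induction k' rule: dec_induct)
  case (step m) then show ?case by (simp add: bs_Suc)
qed simp

lemma integ_at:
  assumes pos: "\<forall>n. x n < length w" and t: "t < length (sigma w (x k))"
  shows "integ w x (blockstart w x k + t) = sigma w (x k) ! t"
proof -
  let ?p = "blockstart w x k + t"
  have "(GREATEST k'. blockstart w x k' \<le> ?p) = k"
  proof (rule Greatest_equality)
    show "blockstart w x k \<le> ?p" by simp
    fix y assume y: "blockstart w x y \<le> ?p"
    show "y \<le> k"
    proof (rule ccontr)
      assume "\<not> y \<le> k"
      then have "Suc k \<le> y" by simp
      then have "blockstart w x (Suc k) \<le> blockstart w x y" using bs_mono[OF pos] by blast
      then show False using y t by (simp add: bs_Suc)
    qed
  qed
  then show ?thesis by (simp add: integ_def Let_def)
qed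

lemma occurs_all:
  assumes pos: "\<forall>n. x n < length w" and pre: "\<forall>n. prefix w (sigma w (x n) @ w)"
  shows "t < length w \<Longrightarrow> integ w x (blockstart w x k + t) = w ! t"
proof (induction t arbitrary: k rule: less_induct)
  case (less t)
  show ?case
  proof (cases "t < length (sigma w (x k))")
    case True
    then show ?thesis using integ_at[OF pos True]
      by (simp add: sigma_def)
  next
    case False
    define t' where "t' = t - length (sigma w (x k))"
    have lt: "t' < t" using False pos[rule_format, of k] less.prems
      by (simp add: t'_def sigma_len)
    have eq: "blockstart w x k + t = blockstart w x (Suc k) + t'"
      using False by (simp add: t'_def bs_Suc)
    have "w ! t = (sigma w (x k) @ w) ! t"
      using pre[rule_format, of k] less.prems by (metis prefix_def nth_append)
    also have "\<dots> = w ! t'" using False by (simp add: nth_append t'_def)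
    finally show ?thesis using eq less.IH[OF lt] lt less.prems by simp
  qed
qed

lemma part1:
  assumes pos: "\<forall>n. x n < length w" and pre: "\<forall>n. prefix w (sigma w (x n) @ w)"
  shows "quasiperiod (integ w x) w"
  unfolding quasiperiod_def
proof (intro conjI allI)
  show "w \<noteq> []" using pos by auto
  fix i
  let ?P = "\<lambda>k. blockstart w x k \<le> i"
  have P0: "?P 0" by (simp add: blockstart_def)
  have bnd: "\<forall>y. ?P y \<longrightarrow> y \<le> i" using bs_ge[OF pos] le_trans by blast
  define k where "k = Greatest ?P"
  have Pk: "?P k" unfolding k_def by (rule GreatestI_nat[where k=0 and b=i]) (use P0 bnd in auto)
  have "\<not> ?P (Suc k)"
  proof
    assume "?P (Suc k)"
    then have "Suc k \<le> k" unfolding k_def by (rule Greatest_le_nat) (use bnd in blast)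
    then show False by simp
  qed
  then have lt: "i < blockstart w x k + length w"
    by (simp add: bs_Suc sigma_len)
  have "occurs_at (integ w x) w (blockstart w x k)"
    unfolding occurs_at_def using occurs_all[OF pos pre] by blast
  then show "\<exists>j\<le>i. i < j + length w \<and> occurs_at (integ w x) w j"
    using Pk lt by blast
qed

lemma pre2:
  assumes "n \<le> k"
  shows "prefix (replicate k a @ [b] @ replicate k a)
     (sigma (replicate k a @ [b] @ replicate k a) n @ (replicate k a @ [b] @ replicate k a))"
proof -
  have "sigma (replicate k a @ [b] @ replicate k a) n = replicate k a @ [b] @ replicate (k - n) a"
    using assms by (simp add: sigma_def Suc_diff_le take_Cons')
  moreover have "replicate (k - n) a @ replicate k a = replicate k a @ replicate (k - n) a"
    by (simp add: replicate_add[symmetric] add.commute)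
  ultimately show ?thesis by (simp add: prefix_def) (metis append.assoc)
qed

theorem mainTheorem2:
  fixes A :: "nat set" and x :: "nat \<Rightarrow> nat"
  assumes "finite A" and "\<forall>n. x n \<in> A"
  shows "(\<forall>w :: 'a list. length w > Max A \<and> (\<forall>n\<in>A. prefix w (sigma w n @ w))
            \<longrightarrow> quasiperiod (integ w x) w)
       \<and> (\<forall>k (a :: 'a) b. A \<subseteq> {0..k} \<and> a \<noteq> b
            \<longrightarrow> quasiperiod (integ (replicate k a @ [b] @ replicate k a) x)
                             (replicate k a @ [b] @ replicate k a))"
proof (intro conjI allI impI)
  fix w :: "'a list"
  assume h: "length w > Max A \<and> (\<forall>n\<in>A. prefix w (sigma w n @ w))"
  have "\<forall>n. x n < length w" using h assms Max_ge le_less_trans by blast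
  moreover have "\<forall>n. prefix w (sigma w (x n) @ w)" using h assms by blast
  ultimately show "quasiperiod (integ w x) w" by (rule part1)
next
  fix k and a b :: 'a
  assume h: "A \<subseteq> {0..k} \<and> a \<noteq> b"
  have xk: "\<forall>n. x n \<le> k" using h assms by auto
  show "quasiperiod (integ (replicate k a @ [b] @ replicate k a) x)
                             (replicate k a @ [b] @ replicate k a)"
  proof (rule part1)
    show "\<forall>n. x n < length (replicate k a @ [b] @ replicate k a)"
      using xk by (simp add: le_imp_less_Suc trans_le_add1)
    show "\<forall>n. prefix (replicate k a @ [b] @ replicate k a)
       (sigma (replicate k a @ [b] @ replicate k a) (x n) @ (replicate k a @ [b] @ replicate k a))"
      using xk by (intro allI pre2) blast
  qed
qed

end
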